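(* Let $n$ be a positive integer and let $P$ and $Q$ be $3$-good partitions of $[n]$ whose collections of $3$-element parts coincide. Then $P=Q$. In other words, a $3$-good partition of $[n]$ is uniquely determined by $n$ together with the set of its parts of size exactly $3$.
   Context: A partition of $[n]=\{1,\dots,n\}$ into nonempty parts is called $3$-good if every part has at most $3$ elements and the sum of the elements of every part is a power of $3$, i.e. equals $3^s$ for some integer $s\ge 0$. *)

theory Defs
  imports Main "HOL-Library.Disjoint_Sets"
begin

definition three_good :: "nat \<Rightarrow> nat set set \<Rightarrow> bool" where
  "three_good n P \<longleftrightarrow> partition_on {1..n} P \<and>
     (\<forall>B\<in>P. card B \<le> 3 \<and> (\<exists>s::nat. \<Sum>B = 3 ^ s))"

end

theory Submission
  imports Defs
begin

lemma part_uniq: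
  assumes "partition_on A P" "X \<in> P" "Y \<in> P" "x \<in> X" "x \<in> Y"
  shows "X = Y"
  using disjointD[OF partition_onD2[OF assms(1)] assms(2,3)] assms(4,5) by blast

lemma pow3_gap:
  assumes "(3::nat)^p < 3^q" shows "3 * 3^p \<le> (3::nat)^q"
proof -
  have "p < q" using assms by (metis nat_power_less_imp_less zero_less_numeral)
  hence "(3::nat)^(Suc p) \<le> 3^q" by (intro power_increasing) auto
  thus ?thesis by simp
qed

lemma shape:
  assumes "finite B" "card B \<le> 2" "m \<in> B" "\<forall>y\<in>B. y \<noteq> m \<longrightarrow> 1 \<le> y \<and> y < (m::nat)"
  shows "B = {m} \<or> (\<exists>a. 1 \<le> a \<and> a < m \<and> B = {m, a})"
proof (cases "B - {m} = {}")
  case True thus ?thesis using assms(3) by blast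
next
  case False
  then obtain a where a: "a \<in> B" "a \<noteq> m" by blast
  have "B = {m, a}"
  proof (rule ccontr)
    assume "B \<noteq> {m, a}"
    then obtain c where "c \<in> B" "c \<noteq> m" "c \<noteq> a" using a assms(3) by blast
    hence "{m, a, c} \<subseteq> B" using a assms(3) by auto
    hence "card {m, a, c} \<le> card B" using assms(1) card_mono by blast
    moreover have "card {m,a,c} = 3" using a \<open>c \<noteq> m\<close> \<open>c \<noteq> a\<close> by auto
    ultimately show False using assms(2) by simp
  qed
  thus ?thesis using a assms(4) by blast
qed

lemma numeric:
  fixes m :: nat
  assumes "B = {m} \<or> (\<exists>a. 1 \<le> a \<and> a < m \<and> B = {m, a})"
    and "C = {m} \<or> (\<exists>a. 1 \<le> a \<and> a < m \<and> C = {m, a})"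
    and "\<Sum>B = 3^p" and "\<Sum>C = 3^q"
  shows "B = C"
proof -
  have gen: False if "m = 3^p" "m + a = 3^q" "1 \<le> a" "a < m" for p q a
  proof -
    have "(3::nat)^p < 3^q" using that by linarith
    from pow3_gap[OF this] show False using that by linarith
  qed
  have gen2: False if "m + a = 3^p" "m + b = 3^q" "a < m" "b < m" "a < b" for p q a b
  proof -
    have "(3::nat)^p < 3^q" using that by linarith
    from pow3_gap[OF this] show False using that by linarith
  qed
  show ?thesis
  proof (cases "B = {m}")
    case B: True
    show ?thesis
    proof (cases "C = {m}")
      case True thus ?thesis using B by simp
    next
      case False
      then obtain a where "1 \<le> a" "a < m" "C = {m,a}" using assms(2) by blast
      thus ?thesis using gen[of p a q] assms(3,4) B by simp
    qed
  next
    case False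
    then obtain a where a: "1 \<le> a" "a < m" "B = {m,a}" using assms(1) by blast
    show ?thesis
    proof (cases "C = {m}")
      case True thus ?thesis using gen[of q a p] assms(3,4) a by simp
    next
      case False
      then obtain b where b: "1 \<le> b" "b < m" "C = {m,b}" using assms(2) by blast
      have "a = b"
      proof (rule ccontr)
        assume "a \<noteq> b"
        hence "a < b \<or> b < a" by auto
        thus False using gen2[of a p b q] gen2[of b q a p] assms(3,4) a b by auto
      qed
      thus ?thesis using a b by simp
    qed
  qed
qed

theorem mainTheorem6:
  fixes n :: nat and P Q :: "nat set set"
  assumes "n \<ge> 1"
    and "three_good n P" and "three_good n Q"
    and "{B\<in>P. card B = 3} = {B\<in>Q. card B = 3}"
  shows "P = Q"
proof -
  have pP: "partition_on {1..n} P" and gP: "\<forall>B\<in>P. card B \<le> 3 \<and> (\<exists>s::nat. \<Sum>B = 3 ^ s)"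
    using assms(2) unfolding three_good_def by auto
  have pQ: "partition_on {1..n} Q" and gQ: "\<forall>B\<in>Q. card B \<le> 3 \<and> (\<exists>s::nat. \<Sum>B = 3 ^ s)"
    using assms(3) unfolding three_good_def by auto
  have subP: "B \<subseteq> {1..n}" if "B \<in> P" for B using partition_onD1[OF pP] that by blast
  have subQ: "B \<subseteq> {1..n}" if "B \<in> Q" for B using partition_onD1[OF pQ] that by blast
  define D where "D = {x\<in>{1..n}. \<exists>B\<in>P. \<exists>C\<in>Q. x \<in> B \<and> x \<in> C \<and> B \<noteq> C}"
  have De: "D = {}"
  proof (rule ccontr)
    assume ne: "D \<noteq> {}"
    have fD: "finite D" unfolding D_def by auto
    define m where "m = Max D"
    have mD: "m \<in> D" using Max_in[OF fD ne] m_def by simp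
    have mmax: "y \<le> m" if "y \<in> D" for y using Max_ge[OF fD that] m_def by simp
    from mD obtain B C where BC: "m \<in> {1..n}" "B \<in> P" "C \<in> Q" "m \<in> B" "m \<in> C" "B \<noteq> C"
      unfolding D_def by blast
    have fB: "finite B" using subP[OF BC(2)] finite_subset by blast
    have fC: "finite C" using subQ[OF BC(3)] finite_subset by blast
    have cB: "card B \<noteq> 3"
    proof
      assume "card B = 3"
      hence "B \<in> Q" using assms(4) BC(2) by blast
      thus False using part_uniq[OF pQ _ BC(3) BC(4) BC(5)] BC(6) by blast
    qed
    have cC: "card C \<noteq> 3"
    proof
      assume "card C = 3"
      hence "C \<in> P" using assms(4) BC(3) by blast
      thus False using part_uniq[OF pP BC(2) _ BC(4) BC(5)] BC(6) by blast
    qed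
    have yB: "1 \<le> y \<and> y < m" if "y \<in> B" "y \<noteq> m" for y
    proof -
      have y1: "y \<in> {1..n}" using subP[OF BC(2)] that by blast
      have "\<not> y > m"
      proof
        assume "y > m"
        hence "y \<notin> D" using mmax by force
        obtain C' where C': "C' \<in> Q" "y \<in> C'" using partition_onD1[OF pQ] y1 by blast
        have "B = C'" using \<open>y \<notin> D\<close> y1 BC(2) C' that(1) unfolding D_def by blast
        hence "C' = C" using part_uniq[OF pQ C'(1) BC(3)] BC(4,5) by blast
        thus False using \<open>B = C'\<close> BC(6) by simp
      qed
      thus ?thesis using y1 that by auto
    qed
    have yC: "1 \<le> y \<and> y < m" if "y \<in> C" "y \<noteq> m" for y
    proof -
      have y1: "y \<in> {1..n}" using subQ[OF BC(3)] that by blast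
      have "\<not> y > m"
      proof
        assume "y > m"
        hence "y \<notin> D" using mmax by force
        obtain B' where B': "B' \<in> P" "y \<in> B'" using partition_onD1[OF pP] y1 by blast
        have "B' = C" using \<open>y \<notin> D\<close> y1 BC(3) B' that(1) unfolding D_def by blast
        hence "B' = B" using part_uniq[OF pP B'(1) BC(2)] BC(4,5) by blast
        thus False using \<open>B' = C\<close> BC(6) by simp
      qed
      thus ?thesis using y1 that by auto
    qed
    have c2B: "card B \<le> 2" using gP BC(2) cB by fastforce
    have c2C: "card C \<le> 2" using gQ BC(3) cC by fastforce
    obtain p where p: "\<Sum>B = 3^p" using gP BC(2) by blast
    obtain q where q: "\<Sum>C = 3^q" using gQ BC(3) by blast
    have "B = C"
      using numeric[OF shape[OF fB c2B BC(4)] shape[OF fC c2C BC(5)] p q] yB yC by blast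
    thus False using BC(6) by simp
  qed
  have PQ: "B \<in> Q" if "B \<in> P" for B
  proof -
    have "B \<noteq> {}" using partition_onD3[OF pP] that by blast
    then obtain x where x: "x \<in> B" by blast
    hence x1: "x \<in> {1..n}" using subP[OF that] by blast
    obtain C where C: "C \<in> Q" "x \<in> C" using partition_onD1[OF pQ] x1 by blast
    have "B = C" using De x x1 C that unfolding D_def by blast
    thus ?thesis using C by simp
  qed
  have QP: "C \<in> P" if "C \<in> Q" for C
  proof -
    have "C \<noteq> {}" using partition_onD3[OF pQ] that by blast
    then obtain x where x: "x \<in> C" by blast
    hence x1: "x \<in> {1..n}" using subQ[OF that] by blast
    obtain B where B: "B \<in> P" "x \<in> B" using partition_onD1[OF pP] x1 by blast
    have "B = C" using De x x1 B that unfolding D_def by blast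
    thus ?thesis using B by simp
  qed
  show ?thesis using PQ QP by blast
qed

end
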